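(* Let $E$ be a congruence on $\overline{\boldsymbol{T}(X_1,\ldots,X_n)}$. If $\overline{\boldsymbol{T}(X_1,\ldots,X_n)}/E$ is not a semifield over $\boldsymbol{T}$, then $\boldsymbol{V}(E)=\varnothing$.
   Context: $\boldsymbol{T}=\mathbb{R}\cup\{-\infty\}$ with $a\oplus b=\max\{a,b\}$, $a\odot b=a+b$. $\overline{\boldsymbol{T}(X_1,\ldots,X_n)}$ is the semifield of fractions of the tropical polynomial function semiring (tropical polynomials modulo equality as functions $\boldsymbol{T}^n\to\boldsymbol{T}$); each element defines a function $\mathbb{R}^n\to\boldsymbol{T}$. A congruence is an equivalence relation compatible with both operations; $\boldsymbol{V}(E)=\{x\in\mathbb{R}^n\mid f(x)=g(x)\ \forall(f,g)\in E\}$. A semifield is a commutative semiring with $0\ne1$ whose nonzero elements are invertible; a semifield $S_2$ is a semifield over the semifield $S_1$ via a semiring homomorphism $S_1\to S_2$ if this homomorphism is injective; here the homomorphism is $\boldsymbol{T}\to\overline{\boldsymbol{T}(X_1,\ldots,X_n)}/E$ sending a constant to its class. *)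

theory Defs
  imports "HOL-Analysis.Analysis"
begin

text \<open>The tropical semifield T = R with -infinity is modelled inside ereal
  (the value +infinity never occurs).
  Elements of the semifield of fractions of tropical polynomial functions are
  represented by the functions R^n -> T they define.\<close>

type_synonym 'n tfun = "real^'n \<Rightarrow> ereal"

definition tmono_val :: "real \<times> ('n::finite \<Rightarrow> nat) \<Rightarrow> real^'n \<Rightarrow> real" where
  "tmono_val m x = fst m + (\<Sum>i\<in>UNIV. real (snd m i) * x $ i)"

text \<open>Tropical polynomial function with a finite nonempty set of monomials with
  finite coefficients (i.e. a nonzero tropical polynomial), evaluated on R^n.\<close>
definition tpoly_val :: "(real \<times> ('n::finite \<Rightarrow> nat)) set \<Rightarrow> real^'n \<Rightarrow> real" where
  "tpoly_val P x = Max ((\<lambda>m. tmono_val m x) ` P)"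

definition tfrac :: "'n::finite tfun set" where
  "tfrac = {\<lambda>x. -\<infinity>} \<union>
     {h. \<exists>P Q. finite P \<and> P \<noteq> {} \<and> finite Q \<and> Q \<noteq> {} \<and>
              h = (\<lambda>x. ereal (tpoly_val P x - tpoly_val Q x))}"

definition tadd :: "'n tfun \<Rightarrow> 'n tfun \<Rightarrow> 'n tfun" where
  "tadd f g = (\<lambda>x. max (f x) (g x))"

definition tmul :: "'n tfun \<Rightarrow> 'n tfun \<Rightarrow> 'n tfun" where
  "tmul f g = (\<lambda>x. f x + g x)"

definition tconst :: "ereal \<Rightarrow> 'n tfun" where
  "tconst c = (\<lambda>x. c)"

definition tcongruence :: "('n::finite tfun \<times> 'n tfun) set \<Rightarrow> bool" where
  "tcongruence E \<longleftrightarrow> equiv tfrac E \<and>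
     (\<forall>f g f' g'. (f, g) \<in> E \<longrightarrow> (f', g') \<in> E \<longrightarrow>
        (tadd f f', tadd g g') \<in> E \<and> (tmul f f', tmul g g') \<in> E)"

text \<open>The quotient semifield / E is a semifield over T: it is a semifield
  (0 <> 1 and nonzero classes are invertible; commutative semiring structure is
  inherited from the congruence), and the map T -> quotient, c |-> class of the
  constant c, is injective.\<close>
definition semifield_over_T :: "('n::finite tfun \<times> 'n tfun) set \<Rightarrow> bool" where
  "semifield_over_T E \<longleftrightarrow>
     E `` {tconst (-\<infinity>)} \<noteq> E `` {tconst 0} \<and>
     (\<forall>f\<in>tfrac. E `` {f} \<noteq> E `` {tconst (-\<infinity>)} \<longrightarrow>
        (\<exists>g\<in>tfrac. E `` {tmul f g} = E `` {tconst 0})) \<and>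
     inj_on (\<lambda>c. E `` {tconst c}) {c. c \<noteq> \<infinity>}"

definition tV :: "('n::finite tfun \<times> 'n tfun) set \<Rightarrow> (real^'n) set" where
  "tV E = {x. \<forall>(f, g)\<in>E. f x = g x}"

end

theory Submission
  imports Defs
begin
lemma tfracI: "finite P \<Longrightarrow> P \<noteq> {} \<Longrightarrow> finite Q \<Longrightarrow> Q \<noteq> {} \<Longrightarrow>
   (\<lambda>x. ereal (tpoly_val P x - tpoly_val Q x)) \<in> tfrac"
  unfolding tfrac_def by (intro UnI2 CollectI exI conjI) (rule refl | assumption)+

lemma tpoly_single: "tpoly_val {(r, \<lambda>i. 0)} x = r"
  by (simp add: tpoly_val_def tmono_val_def)

lemma tconst_in_tfrac:
  assumes "c \<noteq> \<infinity>"
  shows "(tconst c :: 'n::finite tfun) \<in> tfrac"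
proof (cases c)
  case (real r)
  have "tconst c = (\<lambda>x::real^'n. ereal (tpoly_val {(r, \<lambda>i. 0)} x - tpoly_val {(0, \<lambda>i. 0)} x))"
    by (simp only: tpoly_single tconst_def real diff_0_right)
  moreover have "(\<lambda>x::real^'n. ereal (tpoly_val {(r, \<lambda>i. 0)} x - tpoly_val {(0, \<lambda>i. 0)} x)) \<in> tfrac"
    by (rule tfracI) auto
  ultimately show ?thesis by simp
next
  case PInf with assms show ?thesis by simp
next
  case MInf then show ?thesis unfolding tfrac_def tconst_def by (intro UnI1) simp
qed

lemma class_eq_E:
  assumes "equiv tfrac E" "a \<in> tfrac" "E `` {a} = E `` {b}"
  shows "(b, a) \<in> E"
proof -
  have "(a, a) \<in> E" using assms(1,2) unfolding equiv_def refl_on_def by blast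
  then have "a \<in> E `` {b}" using assms(3) by blast
  then show ?thesis by blast
qed

theorem lemma3p7:
  fixes E :: "('n::finite tfun \<times> 'n tfun) set"
  assumes "tcongruence E"
    and "\<not> semifield_over_T E"
  shows "tV E = {}"
proof (rule ccontr)
  assume "tV E \<noteq> {}"
  then obtain x where xin: "x \<in> tV E" by blast
  then have xall: "\<forall>(f, g)\<in>E. f x = g x" unfolding tV_def by simp
  have x: "f x = g x" if "(f, g) \<in> E" for f g
    using xall that by fast
  have eq: "equiv tfrac E" using assms(1) unfolding tcongruence_def by (rule conjunct1)
  have inj: "c = d" if "c \<noteq> \<infinity>" "d \<noteq> \<infinity>"
      "E `` {tconst c :: 'n tfun} = E `` {tconst d}" for c d
  proof -
    have "(tconst d, tconst c) \<in> E"
      using class_eq_E[OF eq tconst_in_tfrac[OF that(1)] that(3)] .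
    from x[OF this] show ?thesis by (simp add: tconst_def)
  qed
  have A: "E `` {tconst (-\<infinity>) :: 'n tfun} \<noteq> E `` {tconst 0}"
  proof
    assume "E `` {tconst (-\<infinity>) :: 'n tfun} = E `` {tconst 0}"
    from inj[OF _ _ this] show False by simp
  qed
  have B: "\<exists>g\<in>tfrac. E `` {tmul f g} = E `` {tconst 0}"
    if "f \<in> tfrac" "E `` {f} \<noteq> E `` {tconst (-\<infinity>)}" for f :: "'n tfun"
  proof -
    have ne: "f \<noteq> (\<lambda>x. -\<infinity>)"
    proof
      assume "f = (\<lambda>x. -\<infinity>)"
      then have "f = tconst (-\<infinity>)" by (simp add: tconst_def)
      with that(2) show False by simp
    qed
    have "f \<in> {\<lambda>x. -\<infinity>} \<union> {h. \<exists>P Q. finite P \<and> P \<noteq> {} \<and> finite Q \<and> Q \<noteq> {} \<and>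
              h = (\<lambda>x. ereal (tpoly_val P x - tpoly_val Q x))}"
      using that(1) unfolding tfrac_def .
    with ne have "f \<in> {h. \<exists>P Q. finite P \<and> P \<noteq> {} \<and> finite Q \<and> Q \<noteq> {} \<and>
              h = (\<lambda>x. ereal (tpoly_val P x - tpoly_val Q x))}" by simp
    then obtain P Q where PQ: "finite P" "P \<noteq> {}" "finite Q" "Q \<noteq> {}"
      "f = (\<lambda>x. ereal (tpoly_val P x - tpoly_val Q x))"
      by (elim CollectE exE conjE)
    let ?g = "\<lambda>x. ereal (tpoly_val Q x - tpoly_val P x)"
    have "?g \<in> tfrac" using PQ by (intro tfracI)
    moreover have "tmul f ?g = tconst 0"
      unfolding tmul_def tconst_def PQ(5) by (simp add: zero_ereal_def)
    ultimately show ?thesis by (intro bexI[of _ ?g]) simp_all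
  qed
  have C: "inj_on (\<lambda>c. E `` {tconst c :: 'n tfun}) {c. c \<noteq> \<infinity>}"
  proof (rule inj_onI)
    fix c d assume "c \<in> {c. c \<noteq> \<infinity>}" "d \<in> {c. c \<noteq> \<infinity>}"
      "E `` {tconst c :: 'n tfun} = E `` {tconst d}"
    then show "c = d" using inj by simp
  qed
  have "semifield_over_T E" unfolding semifield_over_T_def
    using A B C by (intro conjI ballI impI)
  with assms(2) show False by contradiction
qed
end
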